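(* Let $p$ be an odd prime, $q=p^m$, and let $k$ be an integer with $0<k<m$. Let $b,c\in\mathbb F_{q^2}^*$ with $\mathrm N(b)=\mathrm N(c)$, let $c_0\in\mathbb F_{q^2}$, let $\ell(x)=(bx^q+cx)^{p^k}-c_0(bx^q+cx)$ and $f(x)=x^{q+1}+\ell(x^2)$. Then $f$ is a planar function on $\mathbb F_{q^2}$ if and only if all of the following hold: (i) $(b^{-1}c)^{\frac{q+1}2}=-1$; (ii) $\omega^{q-1}\ne b^qc^{-1}$ for every $\omega\in\mathbb F_{q^2}^*$ such that $\omega^{p^k-1}=c_0$; (iii) $\omega^{q-1}\ne b^qc^{-1}$ for every $\omega\in\mathbb F_{q^2}^*$ such that $((b^{-1}c^q)^{p^k}-1)\omega^{p^k-1}=b^{-1}c^qc_0^q-c_0$. In particular, if $d=\gcd(p^k-1,q^2-1)$ divides $q-1$ (equivalently, $\gcd(k,2m)$ divides $m$), then conditions (ii) and (iii) are respectively equivalent to (ii') $c_0^{(q-1)/d}\ne(b^qc^{-1})^{(p^k-1)/d}$, and (iii') $(b^{-1}c^qc_0^q-c_0)^{(q-1)/d}\ne((b^{-1}c^q)^{p^k}-1)^{(q-1)/d}(b^qc^{-1})^{(p^k-1)/d}$.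
   Context: $\mathrm N$ denotes the norm from $\mathbb F_{q^2}$ to $\mathbb F_q$, $\mathrm N(u)=u^{q+1}$. A function $f$ on $\mathbb F_{q^n}$ is planar if for every $c\in\mathbb F_{q^n}^*$ the map $x\mapsto f(x+c)-f(x)$ is a permutation of $\mathbb F_{q^n}$. *)

theory Defs
  imports "HOL-Computational_Algebra.Primes"
begin

definition planar :: "('a::field \<Rightarrow> 'a) \<Rightarrow> bool" where
  "planar f \<longleftrightarrow> (\<forall>c. c \<noteq> 0 \<longrightarrow> bij (\<lambda>x. f (x + c) - f x))"

definition normq :: "nat \<Rightarrow> 'a::field \<Rightarrow> 'a" where
  "normq q u = u ^ (q + 1)"

end

theory Submission
  imports Defs "HOL-Number_Theory.Residues" "HOL-Computational_Algebra.Polynomial"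
begin

lemma card_pow_eq_le:
  fixes c :: "'a::idom"
  assumes "n \<ge> 1"
  shows "card {x. x ^ n = c} \<le> n"
proof -
  define P where "P = monom (1::'a) n - [:c:]"
  have c: "coeff P n = 1" using assms by (cases n) (auto simp: P_def)
  hence "P \<noteq> 0" by auto
  have "degree P \<le> n" unfolding P_def
    by (intro degree_diff_le) (auto simp: degree_monom_le)
  have "{x. x ^ n = c} = {x. poly P x = 0}" by (auto simp: P_def poly_monom)
  with card_poly_roots_bound[OF \<open>P \<noteq> 0\<close>] \<open>degree P \<le> n\<close> show ?thesis by simp
qed

lemma ff_fermat:
  fixes x :: "'a::{field,finite}"
  assumes "x \<noteq> 0"
  shows "x ^ (card (UNIV :: 'a set) - 1) = 1"
proof -
  have "x * (\<Prod>y\<in>UNIV-{0}. x * y) = x * x ^ (card (UNIV :: 'a set) - 1) * \<Prod>(UNIV-{0})"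
    by (simp add: prod.distrib mult_ac)
  moreover have "(\<Prod>y\<in>UNIV-{0}. x * y) = (\<Prod>y\<in>UNIV-{0}. y)"
    by (rule prod.reindex_bij_witness[of _ "\<lambda>y. y / x" "\<lambda>y. x * y"]) (use assms in auto)
  moreover have "\<Prod>(UNIV-{0::'a}) \<noteq> 0" by simp
  ultimately show ?thesis using assms by simp
qed

lemma ff_pow_image:
  fixes v :: "'a::{field,finite}"
  assumes "e * f = card (UNIV :: 'a set) - 1" "e > 0" "f > 0"
  shows "card {v::'a. v ^ f = 1} = f" and "v ^ f = 1 \<Longrightarrow> \<exists>a. a \<noteq> 0 \<and> a ^ e = v"
proof -
  define G where "G = (UNIV - {0::'a})"
  define R where "R = {v::'a. v ^ f = 1}"
  have cG: "card G = e * f" using assms(1) by (simp add: G_def card_Diff_singleton)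
  have img: "(\<lambda>a. a ^ e) ` G \<subseteq> R"
  proof
    fix v assume "v \<in> (\<lambda>a. a ^ e) ` G"
    then obtain a where "a \<in> G" "v = a ^ e" by auto
    thus "v \<in> R" using ff_fermat[of a] assms(1) by (auto simp: R_def G_def power_mult[symmetric])
  qed
  have "G = (\<Union>v\<in>(\<lambda>a. a ^ e) ` G. {a. a ^ e = v} \<inter> G)" by auto
  hence "card G \<le> (\<Sum>v\<in>(\<lambda>a. a ^ e) ` G. card ({a. a ^ e = v} \<inter> G))"
    by (metis card_UN_le finite)
  also have "\<dots> \<le> card ((\<lambda>a. a ^ e) ` G) * e"
  proof -
    have "\<And>v. card ({a. a ^ e = v} \<inter> G) \<le> e"
    proof -
      fix v
      have "card ({a. a ^ e = v} \<inter> G) \<le> card {a. a ^ e = v}" by (intro card_mono) auto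
      also have "\<dots> \<le> e" using card_pow_eq_le[of e v] assms(2) by simp
      finally show "card ({a. a ^ e = v} \<inter> G) \<le> e" .
    qed
    thus ?thesis using sum_bounded_above[of _ "\<lambda>v. card ({a. a ^ e = v} \<inter> G)" e] by simp
  qed
  finally have "f \<le> card ((\<lambda>a. a ^ e) ` G)" using cG assms(2) by (simp add: mult.commute)
  moreover have "card R \<le> f" unfolding R_def using card_pow_eq_le[of f "1::'a"] assms(3) by simp
  moreover have "card ((\<lambda>a. a ^ e) ` G) \<le> card R" using img by (simp add: card_mono)
  ultimately have eq2: "card R = f" by linarith
  have eq1: "(\<lambda>a. a ^ e) ` G = R"
    by (rule card_subset_eq) (use img eq2 \<open>f \<le> card ((\<lambda>a. a ^ e) ` G)\<close> \<open>card ((\<lambda>a. a ^ e) ` G) \<le> card R\<close> in auto)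
  note eq = eq1 eq2
  show "card {v::'a. v ^ f = 1} = f" using eq R_def by simp
  assume "v ^ f = 1"
  hence "v \<in> (\<lambda>a. a ^ e) ` G" using eq R_def by simp
  thus "\<exists>a. a \<noteq> 0 \<and> a ^ e = v" by (auto simp: G_def)
qed

locale pset =
  fixes p m k q :: nat and b c c0 :: "'a::{field,finite}"
  assumes pp: "prime p" and po: "odd p" and qd: "q = p ^ m"
    and card: "card (UNIV :: 'a set) = q ^ 2"
    and k0: "0 < k" and km: "k < m" and b0: "b \<noteq> 0" and cn0: "c \<noteq> 0"
    and nrm: "b ^ (q + 1) = c ^ (q + 1)"
begin

lemma CHAR_p: "CHAR('a) = p"
proof -
  have "CHAR('a) dvd p ^ (2 * m)" using CHAR_dvd_CARD[where 'a='a] card qd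
    by (simp add: power_mult power_mult_distrib mult.commute)
  moreover have "prime CHAR('a)"
    by (rule prime_CHAR_semidom) (rule finite_imp_CHAR_pos, simp)
  ultimately have "CHAR('a) dvd p" using prime_dvd_power by blast
  thus ?thesis using pp \<open>prime CHAR('a)\<close> by (simp add: primes_dvd_imp_eq)
qed

lemma frob_add: "(x + y :: 'a) ^ (p ^ j) = x ^ (p ^ j) + y ^ (p ^ j)"
  by (rule freshmans_dream') (simp_all add: CHAR_p pp)

lemma frob_neg: "(- x :: 'a) ^ (p ^ j) = - (x ^ (p ^ j))"
  using po by (simp add: power_minus_odd)

lemma frob_diff: "(x - y :: 'a) ^ (p ^ j) = x ^ (p ^ j) - y ^ (p ^ j)"
  using frob_add[of x "-y" j] frob_neg[of y j] by simp

lemma frob_two: "(2 :: 'a) ^ (p ^ j) = 2"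
  using frob_add[of 1 1 j] by (simp add: one_add_one)

lemma two_nz: "(2::'a) \<noteq> 0"
proof
  assume "(2::'a) = 0"
  hence "(of_nat 2 :: 'a) = 0" by simp
  hence "CHAR('a) dvd 2" using of_nat_eq_0_iff_char_dvd by blast
  hence "p dvd 2" using CHAR_p by simp
  hence "p \<le> 2" by (rule dvd_imp_le) simp
  moreover have "p \<ge> 2" using pp prime_ge_2_nat by blast
  ultimately have "p = 2" by simp
  thus False using po by simp
qed

lemma p3: "p \<ge> 3"
proof -
  have "p \<ge> 2" using pp prime_ge_2_nat by blast
  moreover have "p \<noteq> 2" using po by auto
  ultimately show ?thesis by simp
qed

lemma q3: "q \<ge> 3"
proof -
  have "p ^ 1 \<le> p ^ m" using km k0 p3 by (intro power_increasing) auto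
  thus ?thesis using p3 qd by simp
qed

lemma q_odd: "odd q" using po qd by simp

lemma qS: "q = Suc (q - 1)" using q3 by simp

lemma fq_add: "(x + y :: 'a) ^ q = x ^ q + y ^ q" using frob_add qd by simp
lemma fq_neg: "(- x :: 'a) ^ q = - (x ^ q)" using frob_neg qd by simp
lemma fq_diff: "(x - y :: 'a) ^ q = x ^ q - y ^ q" using frob_diff qd by simp
lemma fq_two: "(2 :: 'a) ^ q = 2" using frob_two qd by simp

lemma cardm1: "card (UNIV :: 'a set) - 1 = (q - 1) * (q + 1)"
  using card q3 by (simp add: power2_eq_square algebra_simps)

lemma qq: "(x :: 'a) ^ (q ^ 2) = x"
proof (cases "x = 0")
  case True thus ?thesis using q3 by simp
next
  case False
  have "q ^ 2 = Suc (q ^ 2 - 1)" using q3 by simp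
  hence "x ^ (q ^ 2) = x ^ (q ^ 2 - 1) * x" by (metis power_Suc2)
  thus ?thesis using ff_fermat[OF False] card by simp
qed

lemma qq2: "((x :: 'a) ^ q) ^ q = x"
  using qq[of x] by (simp add: power_mult[symmetric] power2_eq_square)

lemma fermat': "(a::'a) \<noteq> 0 \<Longrightarrow> a ^ ((q - 1) * (q + 1)) = 1"
  using ff_fermat[of a] cardm1 by simp

lemma powq1: "(a::'a) ^ (q + 1) = a ^ q * a" by simp

lemma pow_qm1: "(a::'a) ^ (q - 1) * a = a ^ q"
  by (subst (2) qS) (simp add: power_Suc2)

definition "M y = b * y ^ q + c * y"
definition "L y = M y ^ (p ^ k) - c0 * M y"
definition "Lam a x = a * x ^ q + a ^ q * x + L (2 * a * x)"
definition "F x = x ^ (q + 1) + L (x ^ 2)"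

lemma M_add: "M (x + y) = M x + M y"
  by (simp add: M_def fq_add algebra_simps)

lemma L_add: "L (x + y) = L x + L y"
  by (simp add: L_def M_add frob_add algebra_simps)

lemma M0: "M 0 = 0" using q3 by (simp add: M_def)
lemma L0: "L 0 = 0" using p3 by (simp add: L_def M0)

lemma Lam_add: "Lam a (x + y) = Lam a x + Lam a y"
proof -
  have "2 * a * (x + y) = 2 * a * x + 2 * a * y" by (simp add: algebra_simps)
  thus ?thesis by (simp add: Lam_def fq_add L_add algebra_simps)
qed

lemma Lam0: "Lam a 0 = 0" using q3 by (simp add: Lam_def L0)

lemma F_diff: "F (x + a) - F x = Lam a x + (F a - F 0)"
proof -
  have "(x + a) ^ (q + 1) = (x ^ q + a ^ q) * (x + a)" by (simp add: fq_add)
  moreover have "(x + a) ^ 2 = x ^ 2 + (2 * a * x + a ^ 2)" by (simp add: power2_eq_square algebra_simps)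
  moreover have "F 0 = 0" by (simp add: F_def L0)
  ultimately show ?thesis by (simp add: F_def Lam_def L_add algebra_simps)
qed

lemma planar_iff: "planar F \<longleftrightarrow> \<not> (\<exists>a x. a \<noteq> 0 \<and> x \<noteq> 0 \<and> Lam a x = 0)"
proof
  assume pl: "planar F"
  show "\<not> (\<exists>a x. a \<noteq> 0 \<and> x \<noteq> 0 \<and> Lam a x = 0)"
  proof
    assume "\<exists>a x. a \<noteq> 0 \<and> x \<noteq> 0 \<and> Lam a x = 0"
    then obtain a x where ax: "a \<noteq> 0" "x \<noteq> 0" "Lam a x = 0" by blast
    hence "bij (\<lambda>x. F (x + a) - F x)" using pl by (simp add: planar_def)
    hence "inj (\<lambda>x. F (x + a) - F x)" by (simp add: bij_def)
    moreover have "F (x + a) - F x = F (0 + a) - F 0" using F_diff[of x a] F_diff[of 0 a] ax Lam0 by simp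
    ultimately have "x = 0" by (meson injD)
    thus False using ax by simp
  qed
next
  assume nb: "\<not> (\<exists>a x. a \<noteq> 0 \<and> x \<noteq> 0 \<and> Lam a x = 0)"
  show "planar F" unfolding planar_def
  proof (intro allI impI)
    fix a :: 'a assume a: "a \<noteq> 0"
    have "inj (\<lambda>x. F (x + a) - F x)"
    proof (rule injI)
      fix x1 x2 assume "F (x1 + a) - F x1 = F (x2 + a) - F x2"
      hence "Lam a x1 = Lam a x2" using F_diff[of x1 a] F_diff[of x2 a] by simp
      moreover have "Lam a x1 = Lam a (x1 - x2) + Lam a x2" using Lam_add[of a "x1 - x2" x2] by simp
      ultimately have "Lam a (x1 - x2) = 0" by simp
      hence "x1 - x2 = 0" using nb a by blast
      thus "x1 = x2" by simp
    qed
    thus "bij (\<lambda>x. F (x + a) - F x)"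
      by (simp add: bij_def finite_UNIV_inj_surj)
  qed
qed

definition "Bad \<longleftrightarrow> (\<exists>u y. u ^ (q + 1) = 1 \<and> y \<noteq> 0 \<and> u * y + u ^ q * y ^ q + 2 * L y = 0)"

lemma bad_iff: "(\<exists>a x. a \<noteq> 0 \<and> x \<noteq> 0 \<and> Lam a x = 0) \<longleftrightarrow> Bad"
proof
  assume "\<exists>a x. a \<noteq> 0 \<and> x \<noteq> 0 \<and> Lam a x = 0"
  then obtain a x where ax: "a \<noteq> 0" "x \<noteq> 0" "Lam a x = 0" by blast
  define u where "u = a ^ (q - 1)"
  define y where "y = 2 * a * x"
  have "u ^ (q + 1) = a ^ ((q - 1) * (q + 1))" by (simp only: u_def power_mult)
  hence u1: "u ^ (q + 1) = 1" using fermat'[OF ax(1)] by simp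
  have y0: "y \<noteq> 0" using ax two_nz by (simp add: y_def)
  have uy: "u * y = 2 * (a ^ q * x)" using pow_qm1[of a] by (simp add: u_def y_def algebra_simps)
  have uqaq: "u ^ q * a ^ q = a" using qq2[of a] pow_qm1[of a]
    by (simp add: u_def power_mult_distrib[symmetric])
  have "y ^ q = 2 * a ^ q * x ^ q" by (simp add: y_def power_mult_distrib fq_two)
  hence "u ^ q * y ^ q = 2 * (u ^ q * a ^ q) * x ^ q" by (simp add: algebra_simps)
  hence uyq: "u ^ q * y ^ q = 2 * (a * x ^ q)" using uqaq by simp
  have l: "2 * Lam a x = 2 * (a * x ^ q) + 2 * (a ^ q * x) + 2 * L y"
    by (simp add: Lam_def y_def algebra_simps)
  have "u * y + u ^ q * y ^ q + 2 * L y = 2 * (a ^ q * x) + 2 * (a * x ^ q) + 2 * L y"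
    by (simp only: uy uyq)
  hence "u * y + u ^ q * y ^ q + 2 * L y = 2 * Lam a x" using l by (simp add: algebra_simps)
  thus Bad using ax u1 y0 unfolding Bad_def by auto
next
  assume Bad
  then obtain u y where uy: "u ^ (q + 1) = 1" "y \<noteq> 0" "u * y + u ^ q * y ^ q + 2 * L y = 0"
    unfolding Bad_def by blast
  obtain a where a: "a \<noteq> 0" "a ^ (q - 1) = u"
    using ff_pow_image(2)[of "q - 1" "q + 1" u] cardm1 q3 uy(1) by auto
  have u0: "u \<noteq> 0" using uy(1) by auto
  have uinv: "u ^ q * u = 1" using uy(1) by (simp add: mult.commute)
  define x where "x = y / (2 * a)"
  have x0: "x \<noteq> 0" using a uy two_nz by (simp add: x_def)
  have yx: "2 * a * x = y" using a two_nz by (simp add: x_def)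
  have aq: "a ^ q = u * a" using pow_qm1[of a] a by simp
  have xq: "x ^ q = y ^ q / (2 * (u * a))" using aq by (simp add: x_def power_divide power_mult_distrib fq_two)
  have t1: "2 * (a * x ^ q) = u ^ q * y ^ q"
  proof -
    have "2 * (a * x ^ q) = y ^ q / u" using xq a two_nz u0 by (simp add: field_simps)
    also have "\<dots> = u ^ q * y ^ q" using uinv u0 by (simp add: field_simps)
    finally show ?thesis .
  qed
  have t2: "2 * (a ^ q * x) = u * y" using aq yx by (simp add: algebra_simps)
  have "2 * Lam a x = u * y + u ^ q * y ^ q + 2 * L y"
    using t1 t2 yx by (simp add: Lam_def algebra_simps)
  hence "Lam a x = 0" using uy(3) two_nz by simp
  thus "\<exists>a x. a \<noteq> 0 \<and> x \<noteq> 0 \<and> Lam a x = 0" using a(1) x0 by blast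
qed

end

context pset
begin

definition "t = b ^ q * inverse c"

lemma t_alt: "inverse b * c ^ q = t"
proof -
  have "b ^ q * b = c ^ q * c" using nrm by (simp add: mult.commute)
  thus ?thesis using b0 cn0 by (simp add: t_def field_simps)
qed

lemma t_norm: "t ^ (q + 1) = 1"
proof -
  have tq: "t ^ q = b * inverse (c ^ q)" by (simp add: t_def power_mult_distrib power_inverse qq2)
  have "t ^ (q + 1) = t ^ q * t" by (simp add: mult.commute)
  also have "\<dots> = b * inverse (c ^ q) * (inverse b * c ^ q)" using tq t_alt by simp
  also have "\<dots> = 1" using b0 cn0 by (simp add: field_simps)
  finally show ?thesis .
qed

lemma t0: "t \<noteq> 0" using t_norm by auto

lemma kernel_elt: "\<exists>e. e \<noteq> 0 \<and> b * e ^ q + c * e = 0"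
proof -
  have ev: "even (q + 1)" using q_odd by simp
  have "(- (inverse b * c)) ^ (q + 1) = (inverse b * c) ^ (q + 1)"
    using ev by (rule power_minus_even)
  also have "\<dots> = inverse (b ^ (q + 1)) * c ^ (q + 1)"
    by (simp only: power_mult_distrib power_inverse)
  also have "\<dots> = 1" using nrm b0 cn0 by (simp add: field_simps)
  finally have nv: "(- (inverse b * c)) ^ (q + 1) = 1" .
  have "\<exists>e. e \<noteq> 0 \<and> e ^ (q - 1) = - (inverse b * c)"
    by (rule ff_pow_image(2)[OF cardm1[symmetric]]) (use q3 nv in auto)
  then obtain e where e: "e \<noteq> 0" "e ^ (q - 1) = - (inverse b * c)" by blast
  have "b * e ^ q = b * (e ^ (q - 1) * e)" using pow_qm1 by simp
  also have "\<dots> = (b * e ^ (q - 1)) * e" by (simp only: mult.assoc)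
  also have "b * e ^ (q - 1) = - c" using e b0 by (simp add: field_simps)
  finally have "b * e ^ q = - c * e" by simp
  hence "b * e ^ q + c * e = 0" by simp
  thus ?thesis using e(1) by blast
qed

lemma exists_u_nontriv: "\<exists>u::'a. u ^ (q + 1) = 1 \<and> u \<noteq> 1 \<and> u \<noteq> -1"
proof (rule ccontr)
  assume "\<not> ?thesis"
  hence "{u::'a. u ^ (q + 1) = 1} \<subseteq> {1, -1}" by auto
  hence "card {u::'a. u ^ (q + 1) = 1} \<le> card {1, -1::'a}" by (intro card_mono) auto
  also have "\<dots> \<le> 2" by (simp add: card_insert_le_m1)
  moreover have "card {u::'a. u ^ (q + 1) = 1} = q + 1"
    using ff_pow_image(1)[OF cardm1[symmetric]] q3 by simp
  ultimately show False using q3 by simp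
qed

lemma W2:
  assumes z0: "z \<noteq> 0" and zq: "z ^ (q - 1) = t"
    and wq: "(z ^ (p ^ k) - c0 * z) ^ q = z ^ (p ^ k) - c0 * z"
  shows Bad
proof -
  define w where "w = z ^ (p ^ k) - c0 * z"
  have wq': "w ^ q = w" using wq w_def by simp
  have zqq: "z ^ q = t * z" using zq pow_qm1[of z] by simp
  define y1 where "y1 = z / (2 * c)"
  have My1: "M y1 = z"
  proof -
    have "y1 ^ q = t * z / (2 * c ^ q)" by (simp add: y1_def power_divide power_mult_distrib fq_two zqq)
    hence "M y1 = b * (t * z / (2 * c ^ q)) + z / 2" using cn0 by (simp add: M_def y1_def)
    also have "b * t = c ^ q" using t_alt b0 by (auto simp: field_simps)
    hence "b * (t * z / (2 * c ^ q)) = z / 2" using cn0 by (simp add: field_simps)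
    finally show ?thesis using two_nz by (simp add: field_simps)
  qed
  obtain e where e: "e \<noteq> 0" "b * e ^ q + c * e = 0" using kernel_elt by blast
  obtain u where u: "u ^ (q + 1) = 1" "u * e + u ^ q * e ^ q \<noteq> 0"
  proof (cases "e + e ^ q = 0")
    case False
    thus ?thesis using that[of 1] by simp
  next
    case True
    obtain u where u: "u ^ (q + 1) = (1::'a)" "u \<noteq> 1" "u \<noteq> -1" using exists_u_nontriv by blast
    have uqu: "u ^ q * u = 1" using u(1) by (simp add: mult.commute)
    have eq: "e ^ q = - e" using True neg_eq_iff_add_eq_0[of e "e ^ q"] by simp
    have "u * e + u ^ q * e ^ q = e * (u - u ^ q)" by (simp add: eq algebra_simps)
    moreover have "u - u ^ q \<noteq> 0"
    proof
      assume "u - u ^ q = 0"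
      hence "u * u = 1" using uqu by simp
      hence "(u - 1) * (u + 1) = 0" by (simp add: algebra_simps)
      thus False using u by (simp add: eq_neg_iff_add_eq_0)
    qed
    ultimately show ?thesis using that[of u] u e by simp
  qed
  define tau where "tau = u * e + u ^ q * e ^ q"
  have uqq: "(u ^ q) ^ q = u" by (rule qq2)
  have tauq: "tau ^ q = tau" by (simp add: tau_def fq_add power_mult_distrib qq2 algebra_simps)
  define r where "r = - 2 * w - (u * y1 + u ^ q * y1 ^ q)"
  have rq: "r ^ q = r"
    by (simp add: r_def fq_add fq_diff fq_neg power_mult_distrib qq2 fq_two wq' algebra_simps)
  define s where "s = r / tau"
  have sq: "s ^ q = s" by (simp add: s_def power_divide rq tauq)
  define y where "y = y1 + s * e"
  have My: "M y = z"
  proof -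
    have "M (s * e) = s * (b * e ^ q + c * e)" by (simp add: M_def power_mult_distrib sq algebra_simps)
    thus ?thesis using My1 e by (simp add: y_def M_add)
  qed
  have Ly: "L y = w" by (simp add: L_def My w_def)
  have y0: "y \<noteq> 0" using My M0 z0 by auto
  have "u * y + u ^ q * y ^ q = (u * y1 + u ^ q * y1 ^ q) + s * tau"
    by (simp add: y_def fq_add power_mult_distrib sq tau_def algebra_simps)
  also have "s * tau = r" using u(2) by (simp add: s_def tau_def)
  finally have "u * y + u ^ q * y ^ q + 2 * L y = 0" by (simp add: Ly r_def)
  thus Bad unfolding Bad_def using u(1) y0 by blast
qed

end

context pset
begin

lemma pk_split: "(z::'a) ^ (p ^ k) = z ^ (p ^ k - 1) * z"
proof -
  have "p ^ k = Suc (p ^ k - 1)" using p3 by simp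
  thus ?thesis by (metis power_Suc2)
qed

lemma frobw:
  assumes "z ^ q = t * z"
  shows "(z ^ (p ^ k) - c0 * z) ^ q = t ^ (p ^ k) * z ^ (p ^ k) - c0 ^ q * (t * z)"
proof -
  have "(z ^ (p ^ k)) ^ q = (z ^ q) ^ (p ^ k)" by (simp add: power_mult[symmetric] mult.commute)
  thus ?thesis using assms by (simp add: fq_diff power_mult_distrib)
qed

lemma v_norm: "(inverse b * c) ^ (q + 1) = 1"
proof -
  have "(inverse b * c) ^ (q + 1) = inverse (b ^ (q + 1)) * c ^ (q + 1)"
    by (simp only: power_mult_distrib power_inverse)
  also have "\<dots> = 1" using nrm b0 cn0 by (simp add: field_simps)
  finally show ?thesis .
qed

lemma qhalf: "2 * ((q + 1) div 2) = q + 1" using q_odd by simp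

lemma nec_i:
  assumes nb: "\<not> Bad"
  shows "(inverse b * c) ^ ((q + 1) div 2) = -1"
proof (rule ccontr)
  assume ne: "(inverse b * c) ^ ((q + 1) div 2) \<noteq> -1"
  define v where "v = inverse b * c"
  define h where "h = v ^ ((q + 1) div 2)"
  have "h * h = v ^ ((q + 1) div 2 + (q + 1) div 2)" by (simp add: h_def power_add)
  also have "(q + 1) div 2 + (q + 1) div 2 = q + 1" using qhalf by simp
  finally have "h * h = v ^ (q + 1)" .
  hence "h * h = 1" using v_norm v_def by simp
  hence "(h - 1) * (h + 1) = 0" by (simp add: algebra_simps)
  hence "h = 1" using ne h_def v_def by (simp add: eq_neg_iff_add_eq_0)
  have ef: "2 * (q - 1) * ((q + 1) div 2) = card (UNIV :: 'a set) - 1"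
    using cardm1 qhalf by (metis mult.assoc mult.commute)
  have "\<exists>a. a \<noteq> 0 \<and> a ^ (2 * (q - 1)) = v"
    by (rule ff_pow_image(2)[OF ef]) (use q3 \<open>h = 1\<close> h_def in auto)
  then obtain a where a: "a \<noteq> 0" "a ^ (2 * (q - 1)) = v" by blast
  define u where "u = a ^ (q - 1)"
  have "u * u = a ^ ((q - 1) + (q - 1))" by (simp add: u_def power_add)
  also have "(q - 1) + (q - 1) = 2 * (q - 1)" by simp
  finally have uu: "u * u = v" using a(2) by simp
  have "u ^ (q + 1) = a ^ ((q - 1) * (q + 1))" by (simp only: u_def power_mult)
  hence u1: "u ^ (q + 1) = 1" using fermat'[OF a(1)] by simp
  have uqu: "u ^ q * u = 1" using u1 by (simp add: mult.commute)
  obtain y where y: "y \<noteq> 0" "b * y ^ q + c * y = 0" using kernel_elt by blast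
  have "b * y ^ q = - (c * y)" using y(2) by (simp add: add_eq_0_iff2)
  hence yq: "y ^ q = - v * y" using b0 by (simp add: v_def field_simps)
  hence "u ^ q * y ^ q = - ((u ^ q * u) * u * y)" using uu by (simp add: algebra_simps)
  hence e1: "u * y + u ^ q * y ^ q = 0" using uqu by simp
  have "L y = 0" using y(2) p3 by (simp add: L_def M_def)
  hence "u * y + u ^ q * y ^ q + 2 * L y = 0" using e1 by simp
  hence Bad unfolding Bad_def using u1 y(1) by blast
  thus False using nb by simp
qed

lemma nec_iii:
  assumes nb: "\<not> Bad" and z0: "z \<noteq> 0"
    and A: "((inverse b * c ^ q) ^ (p ^ k) - 1) * z ^ (p ^ k - 1) = inverse b * c ^ q * c0 ^ q - c0"
  shows "z ^ (q - 1) \<noteq> b ^ q * inverse c"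
proof
  assume zq: "z ^ (q - 1) = b ^ q * inverse c"
  hence zq': "z ^ (q - 1) = t" by (simp add: t_def)
  have zqq: "z ^ q = t * z" using zq' pow_qm1[of z] by simp
  have A': "(t ^ (p ^ k) - 1) * z ^ (p ^ k - 1) = t * c0 ^ q - c0" using A t_alt by simp
  have "(t ^ (p ^ k) - 1) * z ^ (p ^ k - 1) * z = (t * c0 ^ q - c0) * z" using A' by simp
  hence "t ^ (p ^ k) * z ^ (p ^ k) - c0 ^ q * (t * z) = z ^ (p ^ k) - c0 * z"
    using pk_split[of z] by (simp add: algebra_simps)
  hence "(z ^ (p ^ k) - c0 * z) ^ q = z ^ (p ^ k) - c0 * z" using frobw[OF zqq] by simp
  hence Bad using W2[OF z0 zq'] by simp
  thus False using nb by simp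
qed

lemma nec_ii:
  assumes nb: "\<not> Bad" and z0: "z \<noteq> 0" and A: "z ^ (p ^ k - 1) = c0"
  shows "z ^ (q - 1) \<noteq> b ^ q * inverse c"
proof
  assume zq: "z ^ (q - 1) = b ^ q * inverse c"
  hence zq': "z ^ (q - 1) = t" by (simp add: t_def)
  have "z ^ (p ^ k) - c0 * z = 0" using pk_split[of z] A by simp
  hence "(z ^ (p ^ k) - c0 * z) ^ q = z ^ (p ^ k) - c0 * z" using q3 by simp
  hence Bad using W2[OF z0 zq'] by simp
  thus False using nb by simp
qed

lemma suff:
  assumes i: "(inverse b * c) ^ ((q + 1) div 2) = -1"
    and iii: "\<forall>\<omega>. \<omega> \<noteq> 0 \<and> ((inverse b * c ^ q) ^ (p ^ k) - 1) * \<omega> ^ (p ^ k - 1)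
                      = inverse b * c ^ q * c0 ^ q - c0
                  \<longrightarrow> \<omega> ^ (q - 1) \<noteq> b ^ q * inverse c"
  shows "\<not> Bad"
proof
  assume Bad
  then obtain u y where uy: "u ^ (q + 1) = 1" "y \<noteq> 0" "u * y + u ^ q * y ^ q + 2 * L y = 0"
    unfolding Bad_def by blast
  have uqu: "u ^ q * u = 1" using uy(1) by (simp add: mult.commute)
  define z where "z = M y"
  show False
  proof (cases "z = 0")
    case True
    have "L y = 0" using True p3 by (simp add: L_def z_def)
    hence "u * y + u ^ q * y ^ q = 0" using uy(3) by simp
    hence e1: "u ^ q * y ^ q = - (u * y)" by (simp add: add_eq_0_iff)
    have "(u ^ q * u) * y ^ q = - (u * u * y)" using arg_cong[OF e1, of "\<lambda>x. x * u"] by (simp add: algebra_simps)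
    hence yq: "y ^ q = - (u * u * y)" using uqu by simp
    have "b * y ^ q + c * y = 0" using True by (simp add: z_def M_def)
    hence "(c - b * (u * u)) * y = 0" using yq by (simp add: algebra_simps)
    hence "u * u = inverse b * c" using uy(2) b0 by (simp add: field_simps)
    hence "(inverse b * c) ^ ((q + 1) div 2) = u ^ (2 * ((q + 1) div 2))"
      by (simp add: power_mult power2_eq_square)
    also have "\<dots> = 1" using qhalf uy(1) by simp
    finally have "(1::'a) = -1" using i by simp
    hence "(2::'a) = 0" by (metis add.right_inverse one_add_one)
    thus False using two_nz by simp
  next
    case False
    have zqq: "z ^ q = t * z"
    proof -
      have "z ^ q = b ^ q * y + c ^ q * y ^ q" by (simp add: z_def M_def fq_add power_mult_distrib qq2)
      moreover have "b ^ q * b * inverse c = c ^ q"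
      proof -
        have "b ^ q * b = c ^ q * c" using nrm by (simp add: mult.commute)
        thus ?thesis using cn0 by (simp add: field_simps)
      qed
      moreover have "t * z = (b ^ q * b * inverse c) * y ^ q + b ^ q * y" using cn0
        by (simp add: t_def z_def M_def algebra_simps)
      ultimately show ?thesis by (simp add: algebra_simps)
    qed
    have zq': "z ^ (q - 1) = t" using zqq pow_qm1[of z] False by (metis mult_right_cancel)
    define w where "w = L y"
    have wz: "w = z ^ (p ^ k) - c0 * z" by (simp add: w_def L_def z_def)
    have w2: "2 * w = - (u * y + u ^ q * y ^ q)" using uy(3) add_eq_0_iff[of "u * y + u ^ q * y ^ q" "2 * L y"] by (simp add: w_def)
    have "(2 * w) ^ q = (- (u * y + u ^ q * y ^ q)) ^ q" by (simp only: w2)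
    also have "\<dots> = - ((u * y) ^ q + (u ^ q * y ^ q) ^ q)" by (simp only: fq_neg fq_add)
    also have "\<dots> = - (u ^ q * y ^ q + u * y)" by (simp only: power_mult_distrib qq2)
    also have "\<dots> = 2 * w" using w2 by (simp add: add.commute)
    finally have "(2 * w) ^ q = 2 * w" .
    hence "2 * w ^ q = 2 * w" by (simp add: power_mult_distrib fq_two)
    hence wq: "w ^ q = w" using two_nz by simp
    hence "t ^ (p ^ k) * z ^ (p ^ k) - c0 ^ q * (t * z) = z ^ (p ^ k) - c0 * z"
      using frobw[OF zqq] wz by simp
    hence "(t ^ (p ^ k) - 1) * z ^ (p ^ k - 1) * z = (t * c0 ^ q - c0) * z"
      using pk_split[of z] by (simp add: algebra_simps)
    hence "(t ^ (p ^ k) - 1) * z ^ (p ^ k - 1) = t * c0 ^ q - c0" using False by simp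
    hence "((inverse b * c ^ q) ^ (p ^ k) - 1) * z ^ (p ^ k - 1) = inverse b * c ^ q * c0 ^ q - c0"
      using t_alt by simp
    hence "z ^ (q - 1) \<noteq> b ^ q * inverse c" using iii False by blast
    thus False using zq' t_def by simp
  qed
qed

end

lemma pow_sub_one_split:
  fixes p :: nat assumes "p \<ge> 1"
  shows "p ^ (x + y) - 1 = p ^ x * (p ^ y - 1) + (p ^ x - 1)"
proof -
  have "p ^ x \<ge> 1" "p ^ y \<ge> 1" using assms by auto
  thus ?thesis by (simp add: power_add diff_mult_distrib2)
qed

lemma gcd_pow_minus_one:
  fixes p :: nat assumes p1: "p \<ge> 1"
  shows "gcd (p ^ a - 1) (p ^ b - 1) = p ^ (gcd a b) - 1"
proof (induction "a + b" arbitrary: a b rule: less_induct)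
  case less
  consider "a = 0" | "b = 0" | "0 < b \<and> b \<le> a" | "0 < a \<and> a < b" by linarith
  thus ?case
  proof cases
    case 1 thus ?thesis by simp
  next
    case 2 thus ?thesis by simp
  next
    case 3
    have IH: "gcd (p ^ (a - b) - 1) (p ^ b - 1) = p ^ (gcd (a - b) b) - 1"
      using 3 by (intro less) auto
    have "p ^ a - 1 = p ^ ((a - b) + b) - 1" using 3 by simp
    also have "\<dots> = p ^ (a - b) * (p ^ b - 1) + (p ^ (a - b) - 1)" by (rule pow_sub_one_split[OF p1])
    finally have eq: "p ^ a - 1 = p ^ (a - b) * (p ^ b - 1) + (p ^ (a - b) - 1)" .
    have "gcd (p ^ a - 1) (p ^ b - 1) = gcd (p ^ b - 1) (p ^ a - 1)" by (rule gcd.commute)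
    also have "\<dots> = gcd (p ^ b - 1) (p ^ (a - b) * (p ^ b - 1) + (p ^ (a - b) - 1))" by (simp only: eq)
    also have "\<dots> = gcd (p ^ b - 1) (p ^ (a - b) - 1)" by (rule gcd_add_mult)
    also have "\<dots> = gcd (p ^ (a - b) - 1) (p ^ b - 1)" by (rule gcd.commute)
    finally have "gcd (p ^ a - 1) (p ^ b - 1) = gcd (p ^ (a - b) - 1) (p ^ b - 1)" .
    also have "gcd (a - b) b = gcd a b" using 3 by (simp add: gcd_diff1_nat)
    ultimately show ?thesis using IH by simp
  next
    case 4
    have IH: "gcd (p ^ a - 1) (p ^ (b - a) - 1) = p ^ (gcd a (b - a)) - 1"
      using 4 by (intro less) auto
    have "p ^ b - 1 = p ^ ((b - a) + a) - 1" using 4 by simp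
    also have "\<dots> = p ^ (b - a) * (p ^ a - 1) + (p ^ (b - a) - 1)" by (rule pow_sub_one_split[OF p1])
    finally have eq: "p ^ b - 1 = p ^ (b - a) * (p ^ a - 1) + (p ^ (b - a) - 1)" .
    have "gcd (p ^ a - 1) (p ^ b - 1) = gcd (p ^ a - 1) (p ^ (b - a) * (p ^ a - 1) + (p ^ (b - a) - 1))"
      by (simp only: eq)
    also have "\<dots> = gcd (p ^ a - 1) (p ^ (b - a) - 1)" by (rule gcd_add_mult)
    finally have "gcd (p ^ a - 1) (p ^ b - 1) = gcd (p ^ a - 1) (p ^ (b - a) - 1)" .
    moreover have "gcd a (b - a) = gcd a b"
    proof -
      have "gcd a (b - a) = gcd (b - a) a" by (rule gcd.commute)
      also have "\<dots> = gcd b a" using 4 by (intro gcd_diff1_nat) simp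
      also have "\<dots> = gcd a b" by (rule gcd.commute)
      finally show ?thesis .
    qed
    ultimately show ?thesis using IH by simp
  qed
qed

lemma gcd_part:
  fixes p m k :: nat
  assumes "prime p" "q = p ^ m" "d = gcd (p ^ k - 1) (q ^ 2 - 1)"
  shows "d dvd (q - 1) \<longleftrightarrow> gcd k (2 * m) dvd m"
proof -
  have p1: "p > 1" using assms(1) prime_gt_1_nat by blast
  define g where "g = gcd k (2 * m)"
  have "q ^ 2 = p ^ (2 * m)" using assms(2) by (simp add: power_mult[symmetric] mult.commute)
  hence d: "d = p ^ g - 1" using assms(3) gcd_pow_minus_one[of p k "2 * m"] p1 by (simp add: g_def)
  have "d dvd (q - 1) \<longleftrightarrow> gcd d (q - 1) = d" using gcd_proj1_iff[of d "q - 1"] by simp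
  also have "gcd d (q - 1) = p ^ (gcd g m) - 1" using d assms(2) gcd_pow_minus_one[of p g m] p1 by simp
  also have "(p ^ (gcd g m) - 1 = d) \<longleftrightarrow> p ^ (gcd g m) = p ^ g"
  proof -
    have "p ^ (gcd g m) \<ge> 1" "p ^ g \<ge> 1" using p1 by auto
    thus ?thesis using d by linarith
  qed
  also have "\<dots> \<longleftrightarrow> gcd g m = g" using p1 by simp
  also have "\<dots> \<longleftrightarrow> g dvd m" using gcd_proj1_iff[of g m] by simp
  finally show ?thesis by (simp add: g_def)
qed

context pset
begin

lemma root_crit:
  fixes x s :: 'a
  assumes dd: "d = gcd (p ^ k - 1) (q ^ 2 - 1)" and ddv: "d dvd (q - 1)" and s1: "s ^ (q + 1) = 1"
  shows "(\<exists>\<omega>. \<omega> \<noteq> 0 \<and> \<omega> ^ (p ^ k - 1) = x \<and> \<omega> ^ (q - 1) = s)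
          \<longleftrightarrow> x ^ ((q - 1) div d) = s ^ ((p ^ k - 1) div d)"
proof -
  define E1 where "E1 = p ^ k - 1"
  define E2 where "E2 = q - 1"
  have "1 < p ^ k" by (rule one_less_power) (use p3 k0 in auto)
  hence E1p: "E1 > 0" unfolding E1_def by simp
  have E2p: "E2 > 0" using q3 by (simp add: E2_def)
  have qsq: "q ^ 2 - 1 = E2 * (q + 1)" using q3 by (simp add: E2_def power2_eq_square algebra_simps)
  have d0: "d > 0" using dd E1p E1_def by simp
  have "d dvd E1" using dd E1_def by simp
  then obtain E1' where E1': "E1 = d * E1'" by blast
  obtain E2' where E2': "E2 = d * E2'" using ddv E2_def by blast
  have E1'p: "E1' > 0" using E1' E1p by simp
  have E2'p: "E2' > 0" using E2' E2p by simp
  have div1: "E1 div d = E1'" using E1' d0 by simp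
  have div2: "E2 div d = E2'" using E2' d0 by simp
  show ?thesis unfolding E1_def[symmetric] E2_def[symmetric] unfolding div1 div2
  proof
    assume "\<exists>\<omega>. \<omega> \<noteq> 0 \<and> \<omega> ^ E1 = x \<and> \<omega> ^ E2 = s"
    then obtain \<omega> where w: "\<omega> ^ E1 = x" "\<omega> ^ E2 = s" by blast
    have a1: "x ^ E2' = \<omega> ^ (d * E1' * E2')" using w(1) E1' by (simp add: power_mult)
    have a2: "s ^ E1' = \<omega> ^ (d * E2' * E1')" using w(2) E2' by (simp add: power_mult)
    show "x ^ E2' = s ^ E1'" unfolding a1 a2 by (simp add: mult_ac)
  next
    assume h: "x ^ E2' = s ^ E1'"
    have s0: "s \<noteq> 0" using s1 by auto
    have x0: "x \<noteq> 0" using h s0 E2'p by (auto simp: zero_power)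
    have "gcd E1 E2 = d"
    proof (rule dvd_antisym)
      show "d dvd gcd E1 E2" using \<open>d dvd E1\<close> ddv E2_def by simp
      have "E2 dvd q ^ 2 - 1" using qsq by simp
      hence "gcd E1 E2 dvd q ^ 2 - 1" by (meson dvd_trans gcd_dvd2)
      thus "gcd E1 E2 dvd d" using dd E1_def by simp
    qed
    hence "d * gcd E1' E2' = d" using E1' E2' by (simp add: gcd_mult_distrib_nat)
    hence cop: "gcd E1' E2' = 1" using d0 by simp
    obtain la mu where bz: "E1' * la = E2' * mu + 1" using bezout_nat[of E1' E2'] E1'p cop by auto
    define \<theta> where "\<theta> = x ^ la * inverse s ^ mu"
    have th1: "\<theta> ^ E1' = x"
    proof -
      have "\<theta> ^ E1' = (x ^ la) ^ E1' * (inverse s ^ mu) ^ E1'"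
        by (simp only: \<theta>_def power_mult_distrib)
      also have "(x ^ la) ^ E1' = x ^ (E1' * la)" by (simp only: power_mult[symmetric] mult.commute)
      also have "(inverse s ^ mu) ^ E1' = inverse ((s ^ E1') ^ mu)"
        by (simp only: power_inverse power_mult[symmetric] mult.commute)
      also have "(s ^ E1') ^ mu = x ^ (E2' * mu)" by (simp add: h[symmetric] power_mult)
      also have "x ^ (E1' * la) = x ^ (E2' * mu) * x" by (simp add: bz)
      finally show ?thesis using x0 by simp
    qed
    have th2: "\<theta> ^ E2' = s"
    proof -
      have "\<theta> ^ E2' = (x ^ la) ^ E2' * (inverse s ^ mu) ^ E2'"
        by (simp only: \<theta>_def power_mult_distrib)
      also have "(x ^ la) ^ E2' = (x ^ E2') ^ la" by (simp only: power_mult[symmetric] mult.commute)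
      also have "(inverse s ^ mu) ^ E2' = inverse (s ^ (E2' * mu))"
        by (simp only: power_inverse power_mult[symmetric] mult.commute)
      also have "(x ^ E2') ^ la = s ^ (E1' * la)" by (simp add: h power_mult)
      also have "s ^ (E1' * la) = s ^ (E2' * mu) * s" by (simp add: bz)
      finally show ?thesis using s0 by simp
    qed
    have "\<theta> ^ (E2' * (q + 1)) = (\<theta> ^ E2') ^ (q + 1)" by (rule power_mult)
    hence th3: "\<theta> ^ (E2' * (q + 1)) = 1" using th2 s1 by simp
    have ef: "d * (E2' * (q + 1)) = card (UNIV :: 'a set) - 1"
    proof -
      have "d * (E2' * (q + 1)) = E2 * (q + 1)" using E2' by (simp add: algebra_simps)
      thus ?thesis using cardm1 E2_def by simp
    qed
    have "\<exists>\<omega>. \<omega> \<noteq> 0 \<and> \<omega> ^ d = \<theta>"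
      by (rule ff_pow_image(2)[OF ef]) (use d0 E2'p th3 in auto)
    then obtain \<omega> where w: "\<omega> \<noteq> 0" "\<omega> ^ d = \<theta>" by blast
    have "\<omega> ^ E1 = x" using w th1 E1' by (simp add: power_mult)
    moreover have "\<omega> ^ E2 = s" using w th2 E2' by (simp add: power_mult)
    ultimately show "\<exists>\<omega>. \<omega> \<noteq> 0 \<and> \<omega> ^ E1 = x \<and> \<omega> ^ E2 = s" using w(1) by blast
  qed
qed

end

context pset
begin

lemma e2pos:
  assumes dd: "d = gcd (p ^ k - 1) (q ^ 2 - 1)" and ddv: "d dvd (q - 1)"
  shows "(q - 1) div d > 0"
proof -
  have "q - 1 > 0" using q3 by simp
  moreover have "d > 0" using dd ddv \<open>q - 1 > 0\<close> by (metis dvd_0_left_iff gr0I)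
  ultimately show ?thesis using ddv by (metis dvd_div_eq_0_iff gr0I)
qed

lemma ii_equiv:
  assumes dd: "d = gcd (p ^ k - 1) (q ^ 2 - 1)" and ddv: "d dvd (q - 1)"
  shows "(\<forall>\<omega>. \<omega> \<noteq> 0 \<and> \<omega> ^ (p ^ k - 1) = c0 \<longrightarrow> \<omega> ^ (q - 1) \<noteq> b ^ q * inverse c)
              \<longleftrightarrow> c0 ^ ((q - 1) div d) \<noteq> (b ^ q * inverse c) ^ ((p ^ k - 1) div d)"
proof -
  have "(\<forall>\<omega>. \<omega> \<noteq> 0 \<and> \<omega> ^ (p ^ k - 1) = c0 \<longrightarrow> \<omega> ^ (q - 1) \<noteq> b ^ q * inverse c)
     \<longleftrightarrow> \<not> (\<exists>\<omega>. \<omega> \<noteq> 0 \<and> \<omega> ^ (p ^ k - 1) = c0 \<and> \<omega> ^ (q - 1) = t)"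
    by (auto simp: t_def)
  also have "\<dots> \<longleftrightarrow> \<not> (c0 ^ ((q - 1) div d) = t ^ ((p ^ k - 1) div d))"
    using root_crit[OF dd ddv t_norm, of c0] by simp
  finally show ?thesis by (simp add: t_def)
qed

lemma iii_equiv:
  assumes dd: "d = gcd (p ^ k - 1) (q ^ 2 - 1)" and ddv: "d dvd (q - 1)"
  shows "(\<forall>\<omega>. \<omega> \<noteq> 0 \<and> ((inverse b * c ^ q) ^ (p ^ k) - 1) * \<omega> ^ (p ^ k - 1)
                      = inverse b * c ^ q * c0 ^ q - c0
                  \<longrightarrow> \<omega> ^ (q - 1) \<noteq> b ^ q * inverse c)
              \<longleftrightarrow> (inverse b * c ^ q * c0 ^ q - c0) ^ ((q - 1) div d)
                  \<noteq> ((inverse b * c ^ q) ^ (p ^ k) - 1) ^ ((q - 1) div d)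
                    * (b ^ q * inverse c) ^ ((p ^ k - 1) div d)"
proof -
  define A where "A = (inverse b * c ^ q) ^ (p ^ k) - 1"
  define B where "B = inverse b * c ^ q * c0 ^ q - c0"
  define e1 where "e1 = (p ^ k - 1) div d"
  define e2 where "e2 = (q - 1) div d"
  have e2p: "e2 > 0" using e2pos[OF dd ddv] e2_def by simp
  have tt: "b ^ q * inverse c = t" by (simp add: t_def)
  have key: "(\<forall>\<omega>. \<omega> \<noteq> 0 \<and> A * \<omega> ^ (p ^ k - 1) = B \<longrightarrow> \<omega> ^ (q - 1) \<noteq> t)
      \<longleftrightarrow> (B ^ e2 \<noteq> A ^ e2 * t ^ e1)"
  proof (cases "A = 0")
    case True
    have "\<exists>\<omega>. \<omega> \<noteq> 0 \<and> \<omega> ^ (q - 1) = t"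
      by (rule ff_pow_image(2)[OF cardm1[symmetric]]) (use q3 t_norm in auto)
    then obtain \<omega>0 where w0: "\<omega>0 \<noteq> 0" "\<omega>0 ^ (q - 1) = t" by blast
    have "(\<forall>\<omega>. \<omega> \<noteq> 0 \<and> A * \<omega> ^ (p ^ k - 1) = B \<longrightarrow> \<omega> ^ (q - 1) \<noteq> t) \<longleftrightarrow> B \<noteq> 0"
      using True w0 by auto
    moreover have "(B ^ e2 \<noteq> A ^ e2 * t ^ e1) \<longleftrightarrow> B \<noteq> 0" using True e2p by (simp add: zero_power)
    ultimately show ?thesis by simp
  next
    case False
    have "(\<forall>\<omega>. \<omega> \<noteq> 0 \<and> A * \<omega> ^ (p ^ k - 1) = B \<longrightarrow> \<omega> ^ (q - 1) \<noteq> t)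
       \<longleftrightarrow> \<not> (\<exists>\<omega>. \<omega> \<noteq> 0 \<and> \<omega> ^ (p ^ k - 1) = B / A \<and> \<omega> ^ (q - 1) = t)"
      using False by (auto simp: field_simps)
    also have "\<dots> \<longleftrightarrow> \<not> ((B / A) ^ e2 = t ^ e1)"
      using root_crit[OF dd ddv t_norm, of "B / A"] e1_def e2_def by simp
    also have "(B / A) ^ e2 = t ^ e1 \<longleftrightarrow> B ^ e2 = A ^ e2 * t ^ e1"
      using False by (simp add: power_divide field_simps)
    finally show ?thesis by simp
  qed
  show ?thesis using key by (simp only: A_def B_def e1_def e2_def tt)
qed

end

theorem theorem2p5:
  fixes p m k q d :: nat and b c c0 :: "'a::{field,finite}" and f :: "'a \<Rightarrow> 'a"
  assumes "prime p" and "odd p"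
    and "q = p ^ m"
    and "card (UNIV :: 'a set) = q ^ 2"
    and "0 < k" and "k < m"
    and "b \<noteq> 0" and "c \<noteq> 0"
    and "normq q b = normq q c"
    and "f = (\<lambda>x. x ^ (q + 1) +
               ((b * (x^2) ^ q + c * x^2) ^ (p ^ k) - c0 * (b * (x^2) ^ q + c * x^2)))"
    and "d = gcd (p ^ k - 1) (q ^ 2 - 1)"
  shows "(planar f \<longleftrightarrow>
            (inverse b * c) ^ ((q + 1) div 2) = -1
          \<and> (\<forall>\<omega>. \<omega> \<noteq> 0 \<and> \<omega> ^ (p ^ k - 1) = c0 \<longrightarrow> \<omega> ^ (q - 1) \<noteq> b ^ q * inverse c)
          \<and> (\<forall>\<omega>. \<omega> \<noteq> 0 \<and> ((inverse b * c ^ q) ^ (p ^ k) - 1) * \<omega> ^ (p ^ k - 1)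
                      = inverse b * c ^ q * c0 ^ q - c0
                  \<longrightarrow> \<omega> ^ (q - 1) \<noteq> b ^ q * inverse c))
       \<and> (d dvd (q - 1) \<longleftrightarrow> gcd k (2 * m) dvd m)
       \<and> (d dvd (q - 1) \<longrightarrow>
            ((\<forall>\<omega>. \<omega> \<noteq> 0 \<and> \<omega> ^ (p ^ k - 1) = c0 \<longrightarrow> \<omega> ^ (q - 1) \<noteq> b ^ q * inverse c)
              \<longleftrightarrow> c0 ^ ((q - 1) div d) \<noteq> (b ^ q * inverse c) ^ ((p ^ k - 1) div d))
          \<and> ((\<forall>\<omega>. \<omega> \<noteq> 0 \<and> ((inverse b * c ^ q) ^ (p ^ k) - 1) * \<omega> ^ (p ^ k - 1)
                      = inverse b * c ^ q * c0 ^ q - c0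
                  \<longrightarrow> \<omega> ^ (q - 1) \<noteq> b ^ q * inverse c)
              \<longleftrightarrow> (inverse b * c ^ q * c0 ^ q - c0) ^ ((q - 1) div d)
                  \<noteq> ((inverse b * c ^ q) ^ (p ^ k) - 1) ^ ((q - 1) div d)
                    * (b ^ q * inverse c) ^ ((p ^ k - 1) div d)))"
proof -
  have nrm: "b ^ (q + 1) = c ^ (q + 1)" using assms(9) by (simp add: normq_def)
  interpret P: pset p m k q b c c0
    by unfold_locales (use assms nrm in auto)
  have fF: "f = P.F"
    by (rule ext) (simp add: assms(10) P.F_def P.L_def P.M_def)
  have pl: "planar f \<longleftrightarrow> \<not> P.Bad" by (simp only: fF P.planar_iff P.bad_iff)
  have main: "planar f \<longleftrightarrow>
            (inverse b * c) ^ ((q + 1) div 2) = -1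
          \<and> (\<forall>\<omega>. \<omega> \<noteq> 0 \<and> \<omega> ^ (p ^ k - 1) = c0 \<longrightarrow> \<omega> ^ (q - 1) \<noteq> b ^ q * inverse c)
          \<and> (\<forall>\<omega>. \<omega> \<noteq> 0 \<and> ((inverse b * c ^ q) ^ (p ^ k) - 1) * \<omega> ^ (p ^ k - 1)
                      = inverse b * c ^ q * c0 ^ q - c0
                  \<longrightarrow> \<omega> ^ (q - 1) \<noteq> b ^ q * inverse c)"
    unfolding pl using P.nec_i P.nec_ii P.nec_iii P.suff by blast
  have g: "d dvd (q - 1) \<longleftrightarrow> gcd k (2 * m) dvd m" by (rule gcd_part[OF assms(1) assms(3) assms(11)])
  show ?thesis using main g P.ii_equiv[OF assms(11)] P.iii_equiv[OF assms(11)] by blast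
qed

end
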